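(* Let $d \ge 4$. Then \[ \tau_d \ge \frac{1}{(d+1)(s_d-1)^2}. \]
   Context: For $d \ge 1$, $\tau_d$ is the minimum of $\beta_1\beta_2\cdots\beta_d$ over all $(\beta_1,\dots,\beta_{d+1}) \in \mathbb{R}^{d+1}$ satisfying $\beta_1 \ge \cdots \ge \beta_{d+1} \ge 0$, $\beta_1+\cdots+\beta_{d+1}=1$, and, for every $t \in \{1,\dots,d\}$, $\prod_{i=1}^t (\beta_i - \beta_{d+1}) \le \sum_{j=t+1}^{d+1} (\beta_j - \beta_{d+1}) + (d+1)\beta_{d+1}$. The Sylvester sequence is defined by $s_1 := 2$ and $s_i := 1 + s_1 s_2 \cdots s_{i-1}$ for $i \ge 2$. *)

theory Defs
  imports "HOL-Analysis.Analysis"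
begin

(* Sylvester sequence: sylvester 1 = 2, sylvester i = 1 + prod_{j=1}^{i-1} sylvester j.
   Index 0 is unused (set to 1 by convention). *)
fun sylvester :: "nat \<Rightarrow> nat" where
  "sylvester 0 = 1"
| "sylvester (Suc 0) = 2"
| "sylvester (Suc (Suc n)) = 1 + (\<Prod>j\<in>{1..Suc n}. sylvester j)"

(* Feasible points beta_1..beta_{d+1}, encoded as beta : nat => real restricted to indices 1..d+1 *)
definition tau_feasible :: "nat \<Rightarrow> (nat \<Rightarrow> real) \<Rightarrow> bool" where
  "tau_feasible d \<beta> \<longleftrightarrow>
     (\<forall>i\<in>{1..d}. \<beta> i \<ge> \<beta> (Suc i)) \<and> \<beta> (d+1) \<ge> 0 \<and>
     (\<Sum>i=1..d+1. \<beta> i) = 1 \<and>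
     (\<forall>t\<in>{1..d}. (\<Prod>i=1..t. \<beta> i - \<beta> (d+1))
        \<le> (\<Sum>j=t+1..d+1. \<beta> j - \<beta> (d+1)) + real (d+1) * \<beta> (d+1))"

(* tau_d = min of beta_1 ... beta_d over feasible points (taken as infimum) *)
definition tau :: "nat \<Rightarrow> real" where
  "tau d = Inf ((\<lambda>\<beta>. \<Prod>i=1..d. \<beta> i) ` {\<beta>. tau_feasible d \<beta>})"

end

theory Submission
  imports Defs
begin


lemma abel_prefix:
  fixes b L :: "nat \<Rightarrow> real"
  assumes "\<forall>i\<in>{m..n}. b i \<ge> 0"
    and "\<forall>i j. m \<le> i \<longrightarrow> i \<le> j \<longrightarrow> j \<le> n \<longrightarrow> b j \<le> b i"
    and "\<forall>k\<in>{m..n}. (\<Sum>i=m..k. L i) \<ge> 0"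
  shows "(\<Sum>i=m..n. b i * L i) \<ge> 0"
  using assms
proof (induction n arbitrary: b)
  case 0
  then show ?case by (cases "m = 0") auto
next
  case (Suc n)
  show ?case
  proof (cases "m \<le> Suc n")
    case False then show ?thesis by simp
  next
    case True
    define c where "c i = b i - b (Suc n)" for i
    have split: "(\<Sum>i=m..Suc n. b i * L i) = (\<Sum>i=m..Suc n. c i * L i) + b (Suc n) * (\<Sum>i=m..Suc n. L i)"
      by (simp add: c_def algebra_simps sum.distrib sum_distrib_left sum_subtractf)
    have c0: "(\<Sum>i=m..Suc n. c i * L i) = (\<Sum>i=m..n. c i * L i)"
      using True by (simp add: c_def)
    have "(\<Sum>i=m..n. c i * L i) \<ge> 0"
    proof (rule Suc.IH)
      show "\<forall>i\<in>{m..n}. c i \<ge> 0" using Suc.prems(2) by (auto simp: c_def)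
      show "\<forall>i j. m \<le> i \<longrightarrow> i \<le> j \<longrightarrow> j \<le> n \<longrightarrow> c j \<le> c i" using Suc.prems(2) by (auto simp: c_def)
      show "\<forall>k\<in>{m..n}. (\<Sum>i=m..k. L i) \<ge> 0" using Suc.prems(3) by auto
    qed
    moreover have "b (Suc n) * (\<Sum>i=m..Suc n. L i) \<ge> 0"
    proof -
      have "b (Suc n) \<ge> 0" using Suc.prems(1) True by auto
      moreover have "Suc n \<in> {m..Suc n}" using True by simp
      then have "(\<Sum>i=m..Suc n. L i) \<ge> 0" using Suc.prems(3) by blast
      ultimately show ?thesis by simp
    qed
    ultimately show ?thesis using split c0 by linarith
  qed
qed

lemma abel_suffix:
  fixes w d :: "nat \<Rightarrow> real"
  assumes "\<forall>i\<in>{m..n}. w i \<ge> 0"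
    and "\<forall>i j. m \<le> i \<longrightarrow> i \<le> j \<longrightarrow> j \<le> n \<longrightarrow> w i \<le> w j"
    and "\<forall>k\<in>{m..n}. (\<Sum>i=k..n. d i) \<ge> 0"
  shows "(\<Sum>i=m..n. w i * d i) \<ge> 0"
  using assms
proof (induction "n - m" arbitrary: m w)
  case 0
  then show ?case by (cases "m = n") auto
next
  case (Suc x)
  then have mn: "m < n" by auto
  define c where "c i = w i - w m" for i
  have split: "(\<Sum>i=m..n. w i * d i) = (\<Sum>i=m..n. c i * d i) + w m * (\<Sum>i=m..n. d i)"
    by (simp add: c_def algebra_simps sum.distrib sum_distrib_left sum_subtractf)
  have c0: "(\<Sum>i=m..n. c i * d i) = (\<Sum>i=Suc m..n. c i * d i)"
    using mn by (simp add: c_def sum.atLeast_Suc_atMost)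
  have "(\<Sum>i=Suc m..n. c i * d i) \<ge> 0"
  proof (rule Suc.hyps(1))
    show "x = n - Suc m" using Suc.hyps(2) by simp
    show "\<forall>i\<in>{Suc m..n}. c i \<ge> 0" using Suc.prems(2) by (auto simp: c_def)
    show "\<forall>i j. Suc m \<le> i \<longrightarrow> i \<le> j \<longrightarrow> j \<le> n \<longrightarrow> c i \<le> c j" using Suc.prems(2) by (auto simp: c_def)
    show "\<forall>k\<in>{Suc m..n}. (\<Sum>i=k..n. d i) \<ge> 0" using Suc.prems(3) by auto
  qed
  moreover have "w m * (\<Sum>i=m..n. d i) \<ge> 0"
    using Suc.prems(1,3) mn by auto
  ultimately show ?case using split c0 by linarith
qed

lemma weyl_pos:
  fixes a b :: "nat \<Rightarrow> real"
  assumes pos: "\<forall>i\<in>{m..n}. a i > 0 \<and> b i > 0"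
    and dec: "\<forall>i j. m \<le> i \<longrightarrow> i \<le> j \<longrightarrow> j \<le> n \<longrightarrow> b j \<le> b i"
    and pr: "\<forall>k\<in>{m..n}. (\<Prod>i=m..k. b i) \<le> (\<Prod>i=m..k. a i)"
  shows "(\<Sum>i=m..n. b i) \<le> (\<Sum>i=m..n. a i)"
proof -
  define L where "L i = ln (a i) - ln (b i)" for i
  have "(\<Sum>i=m..n. b i * L i) \<ge> 0"
  proof (rule abel_prefix)
    show "\<forall>i\<in>{m..n}. b i \<ge> 0" using pos by auto
    show "\<forall>i j. m \<le> i \<longrightarrow> i \<le> j \<longrightarrow> j \<le> n \<longrightarrow> b j \<le> b i" using dec by auto
    show "\<forall>k\<in>{m..n}. (\<Sum>i=m..k. L i) \<ge> 0"
    proof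
      fix k assume k: "k \<in> {m..n}"
      have p1: "\<forall>i\<in>{m..k}. a i > 0 \<and> b i > 0" using pos k by auto
      have "ln (\<Prod>i=m..k. b i) \<le> ln (\<Prod>i=m..k. a i)"
        using pr k p1 by (subst ln_le_cancel_iff) (auto intro!: prod_pos)
      moreover have "ln (\<Prod>i=m..k. b i) = (\<Sum>i=m..k. ln (b i))"
        using p1 by (intro ln_prod; fastforce)
      moreover have "ln (\<Prod>i=m..k. a i) = (\<Sum>i=m..k. ln (a i))"
        using p1 by (intro ln_prod; fastforce)
      ultimately show "(\<Sum>i=m..k. L i) \<ge> 0"
        by (simp add: L_def sum_subtractf)
    qed
  qed
  moreover have "\<forall>i\<in>{m..n}. b i * L i \<le> a i - b i"
  proof
    fix i assume i: "i \<in> {m..n}"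
    have ai: "a i > 0" and bi: "b i > 0" using pos i by auto
    have "ln (a i / b i) \<le> a i / b i - 1" using ai bi by (intro ln_le_minus_one) simp
    then have "L i \<le> a i / b i - 1" using ai bi by (simp add: L_def ln_divide_pos)
    then have "b i * L i \<le> b i * (a i / b i - 1)" using bi by (intro mult_left_mono) auto
    also have "\<dots> = a i - b i" using bi by (simp add: field_simps)
    finally show "b i * L i \<le> a i - b i" .
  qed
  then have "(\<Sum>i=m..n. b i * L i) \<le> (\<Sum>i=m..n. a i - b i)"
    by (intro sum_mono) auto
  ultimately show ?thesis by (simp add: sum_subtractf)
qed

lemma weyl_nonneg:
  fixes a b :: "nat \<Rightarrow> real"
  assumes "\<forall>i\<in>{m..n}. a i > 0 \<and> b i \<ge> 0"
    and "\<forall>i j. m \<le> i \<longrightarrow> i \<le> j \<longrightarrow> j \<le> n \<longrightarrow> b j \<le> b i"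
    and "\<forall>k\<in>{m..n}. (\<Prod>i=m..k. b i) \<le> (\<Prod>i=m..k. a i)"
  shows "(\<Sum>i=m..n. b i) \<le> (\<Sum>i=m..n. a i)"
  using assms
proof (induction n)
  case 0
  then show ?case by (cases "m = 0") auto
next
  case (Suc n)
  show ?case
  proof (cases "m \<le> Suc n")
    case False then show ?thesis by simp
  next
    case True
    show ?thesis
    proof (cases "b (Suc n) > 0")
      case True2: True
      show ?thesis
      proof (rule weyl_pos)
        show "\<forall>i\<in>{m..Suc n}. a i > 0 \<and> b i > 0"
        proof
          fix i assume i: "i \<in> {m..Suc n}"
          then have "b (Suc n) \<le> b i" using Suc.prems(2) by auto
          then show "a i > 0 \<and> b i > 0" using True2 Suc.prems(1) i by auto
        qed
      qed (use Suc.prems in auto)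
    next
      case False
      then have b0: "b (Suc n) = 0" using Suc.prems(1) True by force
      show ?thesis
      proof (cases "m = Suc n")
        case True
        then show ?thesis using b0 Suc.prems(1) by force
      next
        case False
        then have mn: "m \<le> n" using True by simp
        have "(\<Sum>i=m..n. b i) \<le> (\<Sum>i=m..n. a i)"
          by (rule Suc.IH) (use Suc.prems in auto)
        moreover have "a (Suc n) > 0" using Suc.prems(1) True by auto
        ultimately show ?thesis using mn b0 by simp
      qed
    qed
  qed
qed

lemma karamata_suffix:
  fixes a z :: "nat \<Rightarrow> real"
  assumes pos: "\<forall>i\<in>{m..n}. a i > 0 \<and> z i > 0"
    and dec: "\<forall>i j. m \<le> i \<longrightarrow> i \<le> j \<longrightarrow> j \<le> n \<longrightarrow> z j \<le> z i"
    and suf: "\<forall>k\<in>{m..n}. (\<Sum>i=k..n. a i) \<le> (\<Sum>i=k..n. z i)"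
  shows "(\<Prod>i=m..n. a i) \<le> (\<Prod>i=m..n. z i)"
proof -
  have "(\<Sum>i=m..n. (1 / z i) * (z i - a i)) \<ge> 0"
  proof (rule abel_suffix)
    show "\<forall>i\<in>{m..n}. 1 / z i \<ge> 0" using pos by auto
    show "\<forall>i j. m \<le> i \<longrightarrow> i \<le> j \<longrightarrow> j \<le> n \<longrightarrow> 1 / z i \<le> 1 / z j"
    proof (intro allI impI)
      fix i j assume "m \<le> i" "i \<le> j" "j \<le> n"
      then have "z j \<le> z i" "z j > 0" using dec pos by auto
      then show "1 / z i \<le> 1 / z j" by (simp add: frac_le)
    qed
    show "\<forall>k\<in>{m..n}. (\<Sum>i=k..n. z i - a i) \<ge> 0"
      using suf by (simp add: sum_subtractf)
  qed
  moreover have "\<forall>i\<in>{m..n}. (1 / z i) * (z i - a i) \<le> ln (z i) - ln (a i)"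
  proof
    fix i assume i: "i \<in> {m..n}"
    have ai: "a i > 0" and zi: "z i > 0" using pos i by auto
    have "ln (a i / z i) \<le> a i / z i - 1" using ai zi by (intro ln_le_minus_one) simp
    then have "ln (a i) - ln (z i) \<le> a i / z i - 1" using ai zi by (simp add: ln_divide_pos)
    moreover have "(1 / z i) * (z i - a i) = 1 - a i / z i" using zi by (simp add: field_simps)
    ultimately show "(1 / z i) * (z i - a i) \<le> ln (z i) - ln (a i)" by linarith
  qed
  then have "(\<Sum>i=m..n. (1 / z i) * (z i - a i)) \<le> (\<Sum>i=m..n. ln (z i) - ln (a i))"
    by (intro sum_mono) auto
  ultimately have "(\<Sum>i=m..n. ln (a i)) \<le> (\<Sum>i=m..n. ln (z i))"
    by (simp add: sum_subtractf)
  moreover have "ln (\<Prod>i=m..n. a i) = (\<Sum>i=m..n. ln (a i))"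
    using pos by (intro ln_prod; fastforce)
  moreover have "ln (\<Prod>i=m..n. z i) = (\<Sum>i=m..n. ln (z i))"
    using pos by (intro ln_prod; fastforce)
  ultimately have "ln (\<Prod>i=m..n. a i) \<le> ln (\<Prod>i=m..n. z i)" by simp
  moreover have "(\<Prod>i=m..n. a i) > 0" "(\<Prod>i=m..n. z i) > 0"
    using pos by (auto intro!: prod_pos)
  ultimately show ?thesis by simp
qed

lemma unimodal:
  fixes b k x1 x x2 :: real and e :: nat
  assumes e: "e \<ge> 1" and k: "k > 0" and x1: "0 < x1" "x1 \<le> x" "x \<le> x2"
  shows "(b - k*x)*x^e \<ge> min ((b - k*x1)*x1^e) ((b - k*x2)*x2^e)"
proof -
  define h where "h t = (b - k*t)*t^e" for t
  define D where "D t = -k * t^e + (b - k*t) * (real e * t^(e-1))" for t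
  have der: "(h has_real_derivative D t) (at t)" for t
    unfolding h_def D_def by (auto intro!: derivative_eq_intros)
  have Deq: "D t = t^(e-1) * (real e * b - (real e + 1) * k * t)" for t
  proof -
    have "t^e = t^(e-1) * t" using e by (metis One_nat_def Suc_diff_le diff_Suc_1 mult.commute power_Suc)
    then show ?thesis unfolding D_def by (simp add: algebra_simps)
  qed
  define xs where "xs = real e * b / ((real e + 1) * k)"
  have nz: "(real e + 1) * k \<noteq> 0" using k by simp
  have xse: "(real e + 1) * k * xs = real e * b"
    unfolding xs_def by (metis nz nonzero_mult_div_cancel_left times_divide_eq_right)
  have sgn1: "D t \<ge> 0" if "0 \<le> t" "t \<le> xs" for t
  proof -
    have "(real e + 1) * k * t \<le> (real e + 1) * k * xs"
      using that k by (intro mult_left_mono) auto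
    also have "\<dots> = real e * b" by (rule xse)
    finally show ?thesis unfolding Deq using that by (intro mult_nonneg_nonneg) auto
  qed
  have sgn2: "D t \<le> 0" if "0 \<le> t" "xs \<le> t" for t
  proof -
    have "(real e + 1) * k * xs \<le> (real e + 1) * k * t"
      using that k by (intro mult_left_mono) auto
    moreover have "(real e + 1) * k * xs = real e * b" by (rule xse)
    ultimately show ?thesis unfolding Deq using that by (intro mult_nonneg_nonpos) auto
  qed
  show ?thesis
  proof (cases "x \<le> xs")
    case True
    have "h x1 \<le> h x"
      by (rule DERIV_nonneg_imp_nondecreasing[OF x1(2)]) (use der sgn1 True x1 in force)
    then show ?thesis unfolding h_def by simp
  next
    case False
    have "(\<lambda>t. - h t) x \<le> (\<lambda>t. - h t) x2"
    proof (rule DERIV_nonneg_imp_nondecreasing[OF x1(3)])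
      fix t assume t: "x \<le> t" "t \<le> x2"
      have "((\<lambda>t. - h t) has_real_derivative - D t) (at t)" using der by (intro DERIV_minus)
      moreover have "- D t \<ge> 0" using sgn2[of t] t False x1 by auto
      ultimately show "\<exists>y. ((\<lambda>t. - h t) has_real_derivative y) (at t) \<and> 0 \<le> y" by blast
    qed
    then show ?thesis unfolding h_def by simp
  qed
qed



lemma sylvester_ge2: "j \<ge> 1 \<Longrightarrow> sylvester j \<ge> 2"
proof (induction j rule: less_induct)
  case (less j)
  show ?case
  proof (cases j)
    case 0 then show ?thesis using less by simp
  next
    case (Suc n)
    show ?thesis
    proof (cases n)
      case 0 then show ?thesis using Suc by simp
    next
      case (Suc n')
      have "(\<Prod>i\<in>{1..Suc n'}. sylvester i) \<ge> 1"
      proof (rule prod_ge_1)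
        fix x assume "x \<in> {1..Suc n'}"
        then have "x < j" "1 \<le> x" using Suc \<open>j = Suc n\<close> by auto
        then show "1 \<le> sylvester x" using less.IH by fastforce
      qed
      then show ?thesis using Suc \<open>j = Suc n\<close> by simp
    qed
  qed
qed

definition sv :: "nat \<Rightarrow> real" where "sv k = (\<Prod>j=1..k. real (sylvester j))"

lemma sv_ge1: "sv k \<ge> 1"
  unfolding sv_def using sylvester_ge2 by (intro prod_ge_1) force

lemma sv_pos: "sv k > 0" using sv_ge1[of k] by simp

lemma syl_succ: "real (sylvester (Suc k)) = 1 + sv k"
proof (cases k)
  case 0 then show ?thesis by (simp add: sv_def)
next
  case (Suc n)
  then show ?thesis by (simp add: sv_def of_nat_prod)
qed

lemma sv_Suc: "sv (Suc k) = sv k * (1 + sv k)"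
proof -
  have "sv (Suc k) = sv k * real (sylvester (Suc k))" unfolding sv_def by (simp add: prod.cl_ivl_Suc)
  also have "\<dots> = sv k * (1 + sv k)" by (simp only: syl_succ)
  finally show ?thesis .
qed

lemma sv_ge: "sv k \<ge> real k + 1"
proof (induction k)
  case 0 then show ?case by (simp add: sv_def)
next
  case (Suc k)
  have "sv k * (1 + sv k) \<ge> 1 + sv k"
    using mult_right_mono[OF sv_ge1[of k], of "1 + sv k"] sv_pos[of k] by simp
  then show ?case unfolding sv_Suc of_nat_Suc using Suc by linarith
qed

definition su :: "nat \<Rightarrow> real" where "su k = 1 / sv k"

lemma su_pos: "su k > 0" using sv_pos[of k] by (simp add: su_def)

lemma su_Suc: "su (Suc k) = su k - 1 / real (sylvester (Suc k))"
  using sv_pos[of k] by (simp add: su_def sv_Suc syl_succ field_simps)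

lemma su_le1: "su k \<le> 1" using sv_ge1[of k] by (simp add: su_def)

lemma su_prod: "su k = (\<Prod>j=1..k. 1 / real (sylvester j))"
  by (simp add: su_def sv_def prod_dividef)

lemma su_0: "su 0 = 1" by (simp add: su_def sv_def)

lemma su_sum: "s \<le> t \<Longrightarrow> (\<Sum>i=Suc s..t. 1 / real (sylvester i)) = su s - su t"
proof (induction t)
  case 0 then show ?case by simp
next
  case (Suc t)
  show ?case
  proof (cases "s = Suc t")
    case True then show ?thesis by simp
  next
    case False
    then have "s \<le> t" using Suc by simp
    then show ?thesis using Suc by (simp add: su_Suc)
  qed
qed

lemma su_prod_seg: "s \<le> t \<Longrightarrow> su t = su s * (\<Prod>i=Suc s..t. 1 / real (sylvester i))"
proof -
  assume st: "s \<le> t"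
  have "{1..t} = {1..s} \<union> {Suc s..t}" using st by auto
  then have "(\<Prod>i=1..t. 1 / real (sylvester i)) = (\<Prod>i=1..s. 1 / real (sylvester i)) * (\<Prod>i=Suc s..t. 1 / real (sylvester i))"
    by (simp add: prod.union_disjoint[symmetric] ivl_disj_int)
  then show ?thesis by (simp add: su_prod)
qed

lemma su_Suc2: "su (Suc k) = su k * su k / (1 + su k)"
  using sv_pos[of k] by (simp add: su_def sv_Suc field_simps)

lemma chain_step:
  fixes N :: real
  assumes "m \<ge> 2" "N = real (j + m + 1)"
  shows "N * sv j \<le> (1 + sv j) ^ m"
proof -
  define x where "x = sv j"
  have x: "x \<ge> real j + 1" using sv_ge[of j] by (simp add: x_def)
  have "(1 + x) ^ (m - 1) \<ge> 1 + real (m - 1) * x"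
    using x by (intro Bernoulli_inequality) simp
  moreover have "(1 + x) ^ m = (1 + x) * (1 + x) ^ (m - 1)"
    using assms(1) by (metis Suc_diff_1 less_le_trans pos2 power_Suc)
  ultimately have "(1 + x) ^ m \<ge> (1 + x) * (1 + real (m - 1) * x)"
    using x by (simp add: mult_left_mono)
  moreover have "(1 + x) * (1 + real (m - 1) * x) \<ge> N * x"
  proof -
    have m1: "real (m - 1) \<ge> 1" using assms(1) by simp
    have "real (m - 1) * x \<ge> x" using m1 x by (simp add: mult_right_mono[of 1 "real (m-1)" x, simplified])
    have e: "(1 + x) * (1 + real (m - 1) * x) - N * x = 1 + x * (real (m - 1) * x - real j - 1)"
      using assms(1,2) by (simp add: algebra_simps of_nat_diff)
    have "real (m - 1) * x - real j - 1 \<ge> 0" using \<open>real (m - 1) * x \<ge> x\<close> x by linarith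
    moreover have "x \<ge> 0" using x by linarith
    ultimately have "x * (real (m - 1) * x - real j - 1) \<ge> 0" by (metis mult_nonneg_nonneg)
    then show ?thesis using e by linarith
  qed
  ultimately show ?thesis unfolding x_def by linarith
qed



lemma X_chain:
  fixes N :: real
  assumes N: "N = real (d+1)"
  shows "i \<le> d - 1 \<Longrightarrow> N^i * sv (d-1-i)^(i+2) \<le> sv (d-1)^2"
proof (induction i)
  case 0 then show ?case by (simp add: power2_eq_square)
next
  case (Suc i)
  define j where "j = d - 2 - i"
  have jd: "Suc j = d - 1 - i" "d - 1 - Suc i = j" using Suc.prems by (auto simp: j_def)
  have Nj: "N = real (j + (i+2) + 1)" using Suc.prems N by (simp add: j_def)
  have cs: "N * sv j \<le> (1 + sv j) ^ (i+2)" by (rule chain_step[OF _ Nj]) simp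
  have vpos: "sv j > 0" using sv_pos by simp
  have "N^(Suc i) * sv j ^ (Suc i + 2) = N^i * sv j^(i+2) * (N * sv j)"
    by (simp add: power_Suc algebra_simps)
  also have "\<dots> \<le> N^i * sv j^(i+2) * (1 + sv j)^(i+2)"
    using cs vpos N by (intro mult_left_mono) auto
  also have "\<dots> = N^i * sv (Suc j)^(i+2)"
    by (simp add: sv_Suc power_mult_distrib)
  also have "\<dots> \<le> sv (d-1)^2" using Suc jd by simp
  finally show ?case using jd by simp
qed

lemma W_chain:
  fixes N :: real
  assumes N: "N = real (d+1)" and j: "j \<le> d - 1" and d: "d \<ge> 1"
  shows "su (d-1) ^ 2 / N \<le> su j ^ (d - j + 1) / N ^ (d - j)"
proof -
  define i where "i = d - 1 - j"
  have ij: "d - 1 - i = j" "d - j + 1 = i + 2" "d - j = Suc i" using j d by (auto simp: i_def)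
  have X: "N^i * sv j^(i+2) \<le> sv (d-1)^2"
    using X_chain[OF N, of i] ij(1) by (simp add: i_def)
  have Np: "N > 0" using N by simp
  have vp: "sv j > 0" "sv (d-1) > 0" using sv_pos by auto
  have "su (d-1) ^ 2 / N = 1 / (N * sv (d-1)^2)" by (simp add: su_def power_one_over)
  also have "\<dots> \<le> 1 / (N * (N^i * sv j^(i+2)))"
    using X Np vp by (intro divide_left_mono mult_left_mono mult_pos_pos) auto
  also have "\<dots> = su j ^ (d - j + 1) / N ^ (d - j)"
    unfolding ij by (simp add: su_def power_one_over field_simps)
  finally show ?thesis .
qed

lemma num_bound:
  fixes g N :: real
  assumes d: "d \<ge> 1" and N: "N = real (d+1)" and q: "q \<le> d - 1" and gp: "g > 0" and g1: "N*g \<le> su q"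
    and g2: "q < d - 1 \<Longrightarrow> su (Suc q) < N*g"
  shows "su (d-1)^2 / N \<le> su q * (su q - real d * g) * g^(d-1-q)"
proof -
  have Np: "N > 0" using N by simp
  have dN: "real d \<le> N" using N by simp
  have sq: "su q > 0" using su_pos by simp
  show ?thesis
  proof (cases "q = d - 1")
    case True
    have "real d * g \<le> real d * (su q / N)" using g1 Np by (intro mult_left_mono) (auto simp: field_simps)
    then have "su q - real d * g \<ge> su q - real d * su q / N" by simp
    also have "su q - real d * su q / N = su q / N" using N by (simp add: field_simps)
    finally have h: "su q - real d * g \<ge> su q / N" .
    have "su q * (su q - real d * g) \<ge> su q * (su q / N)" using h sq by (intro mult_left_mono) auto
    then show ?thesis using True by (simp add: power2_eq_square)
  next
    case False
    then have qd: "q < d - 1" using q by simp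
    define e where "e = d - 1 - q"
    have e1: "e \<ge> 1" using qd by (simp add: e_def)
    define x1 where "x1 = su (Suc q) / N"
    define x2 where "x2 = su q / N"
    have x1p: "x1 > 0" using su_pos Np by (simp add: x1_def)
    have x1g: "x1 \<le> g" using g2[OF qd] Np by (simp add: x1_def field_simps)
    have gx2: "g \<le> x2" using g1 Np by (simp add: x2_def field_simps)
    have dp: "real d > 0" using d by simp
    have um: "(su q - real d * g) * g^e \<ge> min ((su q - real d*x1)*x1^e) ((su q - real d*x2)*x2^e)"
      by (rule unimodal[OF e1 dp x1p x1g gx2])
    have R: "su q * ((su q - real d*x2)*x2^e) = su q ^ (d - q + 1) / N ^ (d - q)"
    proof -
      have "su q - real d * x2 = su q / N" using N by (simp add: x2_def field_simps)
      then have "su q * ((su q - real d*x2)*x2^e) = su q * (su q / N) * (su q / N)^e" by (simp add: x2_def)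
      also have "\<dots> = su q ^ (e + 2) / N ^ (e + 1)" by (simp add: power_divide field_simps power_Suc)
      finally have X: "su q * ((su q - real d*x2)*x2^e) = su q ^ (e + 2) / N ^ (e + 1)" .
      have E: "d - q + 1 = e + 2" "d - q = e + 1" using qd by (auto simp: e_def)
      show ?thesis unfolding E(1) unfolding E(2) by (rule X)
    qed
    have L: "su q * ((su q - real d*x1)*x1^e) \<ge> su (Suc q) ^ (d - Suc q + 1) / N ^ (d - Suc q)"
    proof -
      have s1: "su (Suc q) = su q * su q / (1 + su q)" by (rule su_Suc2)
      have "real d * x1 \<le> su (Suc q)" using dN su_pos[of "Suc q"] Np
        by (simp add: x1_def field_simps mult_right_mono)
      then have "su q - real d * x1 \<ge> su q - su (Suc q)" by simp
      moreover have "su q - su (Suc q) = su q / (1 + su q)" using sq s1 by (simp add: field_simps)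
      ultimately have "su q * (su q - real d * x1) \<ge> su q * (su q / (1 + su q))" using sq
        by (intro mult_left_mono) auto
      also have "su q * (su q / (1 + su q)) = su (Suc q)" using s1 by simp
      finally have A: "su q * (su q - real d * x1) \<ge> su (Suc q)" .
      have "su q * ((su q - real d*x1)*x1^e) = (su q * (su q - real d * x1)) * x1^e" by simp
      also have "\<dots> \<ge> su (Suc q) * x1^e" using A x1p by (intro mult_right_mono) auto
      finally have B: "su q * ((su q - real d*x1)*x1^e) \<ge> su (Suc q) * x1^e" .
      have X: "su (Suc q) * x1^e = su (Suc q) ^ (e+1) / N^e" by (simp add: x1_def power_divide)
      moreover have "e + 1 = d - Suc q + 1" "e = d - Suc q" using qd by (auto simp: e_def)
      ultimately show ?thesis using B by simp
    qed
    have W1: "su (d-1)^2 / N \<le> su q ^ (d - q + 1) / N ^ (d - q)"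
      by (rule W_chain[OF N q d])
    have W2: "su (d-1)^2 / N \<le> su (Suc q) ^ (d - Suc q + 1) / N ^ (d - Suc q)"
      by (rule W_chain[OF N _ d]) (use qd in simp)
    have "su q * ((su q - real d * g) * g^e) \<ge> su q * min ((su q - real d*x1)*x1^e) ((su q - real d*x2)*x2^e)"
      using um sq by (intro mult_left_mono) auto
    also have "su q * min ((su q - real d*x1)*x1^e) ((su q - real d*x2)*x2^e)
        = min (su q * ((su q - real d*x1)*x1^e)) (su q * ((su q - real d*x2)*x2^e))"
      using sq by (simp add: min_mult_distrib_left)
    finally have M: "su q * ((su q - real d * g) * g^e) \<ge> min (su q * ((su q - real d*x1)*x1^e)) (su q * ((su q - real d*x2)*x2^e))" .
    have Z: "su (d-1)^2 / N \<le> min (su q * ((su q - real d*x1)*x1^e)) (su q * ((su q - real d*x2)*x2^e))"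
      using W1 W2 L R by simp
    have "su (d-1)^2 / N \<le> su q * ((su q - real d * g) * g^e)" using order_trans[OF Z M] .
    then show ?thesis by (simp add: e_def mult.assoc)
  qed
qed



lemma sum_split_at:
  fixes f :: "nat \<Rightarrow> 'a::comm_monoid_add"
  assumes "m \<le> Suc s" "s \<le> t"
  shows "(\<Sum>i=m..t. f i) = (\<Sum>i=m..s. f i) + (\<Sum>i=Suc s..t. f i)"
proof -
  have "{m..t} = {m..s} \<union> {Suc s..t}" using assms by auto
  moreover have "{m..s} \<inter> {Suc s..t} = {}" by auto
  ultimately show ?thesis by (simp add: sum.union_disjoint)
qed

lemma prod_split_at:
  fixes f :: "nat \<Rightarrow> 'a::comm_monoid_mult"
  assumes "m \<le> Suc s" "s \<le> t"
  shows "(\<Prod>i=m..t. f i) = (\<Prod>i=m..s. f i) * (\<Prod>i=Suc s..t. f i)"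
proof -
  have "{m..t} = {m..s} \<union> {Suc s..t}" using assms by auto
  moreover have "{m..s} \<inter> {Suc s..t} = {}" by auto
  ultimately show ?thesis by (simp add: prod.union_disjoint)
qed

lemma main_bound:
  fixes \<beta> :: "nat \<Rightarrow> real"
  assumes d: "d \<ge> 1"
    and ord: "\<forall>i\<in>{1..d}. \<beta> i \<ge> \<beta> (Suc i)"
    and nn: "\<beta> (d+1) \<ge> 0"
    and sum1: "(\<Sum>i=1..d+1. \<beta> i) = 1"
    and cons: "\<forall>t\<in>{1..d}. (\<Prod>i=1..t. \<beta> i - \<beta> (d+1))
        \<le> (\<Sum>j=t+1..d+1. \<beta> j - \<beta> (d+1)) + real (d+1) * \<beta> (d+1)"
  shows "su (d-1)^2 / real (d+1) \<le> (\<Prod>i=1..d. \<beta> i)"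
proof -
  define \<gamma> where "\<gamma> = \<beta> (d+1)"
  define N where "N = real (d+1)"
  define \<alpha> where "\<alpha> i = \<beta> i - \<gamma>" for i
  define R where "R t = (\<Sum>j=t+1..d+1. \<beta> j - \<gamma>) + N * \<gamma>" for t
  define P where "P t = (\<Prod>i=1..t. \<alpha> i)" for t
  have Np: "N > 0" by (simp add: N_def)
  have mono: "\<beta> j \<le> \<beta> i" if "1 \<le> i" "i \<le> j" "j \<le> d+1" for i j
    using that
  proof (induction j)
    case 0 then show ?case by simp
  next
    case (Suc j)
    show ?case
    proof (cases "i = Suc j")
      case True then show ?thesis by simp
    next
      case False
      then have "i \<le> j" using Suc by simp
      then have "\<beta> j \<le> \<beta> i" using Suc by simp
      moreover have "\<beta> (Suc j) \<le> \<beta> j" using ord Suc \<open>i \<le> j\<close> by auto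
      ultimately show ?thesis by simp
    qed
  qed
  have anonneg: "\<alpha> i \<ge> 0" if "1 \<le> i" "i \<le> d+1" for i
    using mono[OF that(1) that(2)] by (simp add: \<alpha>_def \<gamma>_def)
  have Pcons: "P t \<le> R t" if "t \<in> {1..d}" for t
    using cons that by (simp add: P_def R_def \<alpha>_def \<gamma>_def N_def)
  have Rsplit: "R s = R k + (\<Sum>i=Suc s..k. \<alpha> i)" if "s \<le> k" "k \<le> d+1" for s k
  proof -
    have "(\<Sum>j=s+1..d+1. \<beta> j - \<gamma>) = (\<Sum>j=s+1..k. \<beta> j - \<gamma>) + (\<Sum>j=Suc k..d+1. \<beta> j - \<gamma>)"
      using that by (intro sum_split_at) auto
    then show ?thesis by (simp add: R_def \<alpha>_def)
  qed
  have R0: "R 0 = 1"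
  proof -
    have "(\<Sum>j=1..d+1. \<beta> j - \<gamma>) = 1 - real (d+1) * \<gamma>"
      using sum1 by (simp add: sum_subtractf)
    then show ?thesis by (simp add: R_def N_def)
  qed
  have Rd: "R d = N * \<gamma>" by (simp add: R_def \<gamma>_def)
  have sum_alpha_nn: "(\<Sum>i=Suc s..k. \<alpha> i) \<ge> 0" if "k \<le> d+1" for s k
    using that anonneg by (intro sum_nonneg) auto
  have Rge: "R k \<ge> N * \<gamma>" if "k \<le> d" for k
    using Rsplit[of k d] that Rd sum_alpha_nn[of d k, OF le_add1] by simp
  have LS: "su k \<le> R k" if kd: "k \<le> d" for k
  proof -
    define Sset where "Sset = {s. s \<le> k \<and> su s \<le> P s}"
    have fin: "finite Sset" unfolding Sset_def by simp
    have "0 \<in> Sset" unfolding Sset_def by (simp add: P_def su_0)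
    then have ne: "Sset \<noteq> {}" by auto
    define s where "s = Max Sset"
    have s_in: "s \<in> Sset" unfolding s_def using fin ne by (rule Max_in)
    then have sk: "s \<le> k" and us: "su s \<le> P s" unfolding Sset_def by auto
    have after: "P t < su t" if "s < t" "t \<le> k" for t
    proof (rule ccontr)
      assume "\<not> P t < su t"
      then have "t \<in> Sset" using that unfolding Sset_def by auto
      then have "t \<le> s" unfolding s_def using fin by simp
      then show False using that by simp
    qed
    have Rs: "su s \<le> R s"
    proof (cases "s = 0")
      case True then show ?thesis using R0 su_0 by simp
    next
      case False
      then have "s \<in> {1..d}" using sk kd by auto
      then show ?thesis using Pcons us by force
    qed
    have Psp: "P s > 0" using us su_pos[of s] by linarith
    have W: "(\<Sum>i=Suc s..k. \<alpha> i) \<le> (\<Sum>i=Suc s..k. 1 / real (sylvester i))"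
    proof (rule weyl_nonneg)
      show "\<forall>i\<in>{Suc s..k}. 1 / real (sylvester i) > 0 \<and> \<alpha> i \<ge> 0"
      proof
        fix i assume i: "i \<in> {Suc s..k}"
        have "sylvester i \<ge> 2" using i by (intro sylvester_ge2) auto
        then show "1 / real (sylvester i) > 0 \<and> \<alpha> i \<ge> 0" using i kd anonneg by auto
      qed
      show "\<forall>i j. Suc s \<le> i \<longrightarrow> i \<le> j \<longrightarrow> j \<le> k \<longrightarrow> \<alpha> j \<le> \<alpha> i"
        using mono kd by (auto simp: \<alpha>_def)
      show "\<forall>t\<in>{Suc s..k}. (\<Prod>i=Suc s..t. \<alpha> i) \<le> (\<Prod>i=Suc s..t. 1 / real (sylvester i))"
      proof
        fix t assume t: "t \<in> {Suc s..k}"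
        have Pt: "P t = P s * (\<Prod>i=Suc s..t. \<alpha> i)"
          unfolding P_def using t by (intro prod_split_at) auto
        have ut: "su t = su s * (\<Prod>i=Suc s..t. 1 / real (sylvester i))"
          using t by (intro su_prod_seg) auto
        have lt: "P t < su t" using after t by auto
        have anp: "(\<Prod>i=Suc s..t. \<alpha> i) \<ge> 0"
          using t kd anonneg by (intro prod_nonneg) auto
        show "(\<Prod>i=Suc s..t. \<alpha> i) \<le> (\<Prod>i=Suc s..t. 1 / real (sylvester i))"
        proof (rule ccontr)
          assume "\<not> ?thesis"
          then have gt: "(\<Prod>i=Suc s..t. 1 / real (sylvester i)) < (\<Prod>i=Suc s..t. \<alpha> i)" by simp
          have "su t < su s * (\<Prod>i=Suc s..t. \<alpha> i)"
            unfolding ut using gt su_pos[of s] by (intro mult_strict_left_mono) auto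
          also have "\<dots> \<le> P s * (\<Prod>i=Suc s..t. \<alpha> i)"
            using us anp by (intro mult_right_mono) auto
          finally show False using Pt lt by simp
        qed
      qed
    qed
    have "(\<Sum>i=Suc s..k. 1 / real (sylvester i)) = su s - su k" using sk by (rule su_sum)
    moreover have "R s = R k + (\<Sum>i=Suc s..k. \<alpha> i)" using sk kd by (intro Rsplit) auto
    ultimately show ?thesis using W Rs by linarith
  qed
  have gp: "\<gamma> > 0"
  proof -
    have "su d \<le> N * \<gamma>" using LS[of d] Rd by simp
    then have "N * \<gamma> > 0" using su_pos[of d] by linarith
    then show ?thesis using Np by (simp add: zero_less_mult_iff)
  qed
  have bpos: "\<beta> i > 0" if "1 \<le> i" "i \<le> d+1" for i
    using mono[OF that] gp by (simp add: \<gamma>_def)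
  define Qset where "Qset = {k. k \<le> d - 1 \<and> N * \<gamma> \<le> su k}"
  have finQ: "finite Qset" unfolding Qset_def by simp
  have "N * \<gamma> \<le> 1"
    using Rsplit[of 0 d] Rd R0 sum_alpha_nn[of d 0, OF le_add1] by simp
  then have "0 \<in> Qset" unfolding Qset_def by (simp add: su_0)
  then have neQ: "Qset \<noteq> {}" by auto
  define q where "q = Max Qset"
  have q_in: "q \<in> Qset" unfolding q_def using finQ neQ by (rule Max_in)
  then have qd: "q \<le> d - 1" and gq: "N * \<gamma> \<le> su q" unfolding Qset_def by auto
  have gq2: "su (Suc q) < N * \<gamma>" if "q < d - 1"
  proof (rule ccontr)
    assume "\<not> su (Suc q) < N * \<gamma>"
    then have "Suc q \<in> Qset" using that unfolding Qset_def by auto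
    then have "Suc q \<le> q" unfolding q_def using finQ by simp
    then show False by simp
  qed
  define a where "a i = (if i \<le> q then 1 / real (sylvester i) + \<gamma> else if i = Suc q then su q - real d * \<gamma> else \<gamma>)" for i
  have aq: "su q - real d * \<gamma> \<ge> \<gamma>" using gq by (simp add: N_def algebra_simps)
  have apos: "a i > 0" if "1 \<le> i" for i
  proof (cases "i \<le> q")
    case True
    have "sylvester i \<ge> 2" using that by (intro sylvester_ge2)
    then have h: "1 / real (sylvester i) > 0" by simp
    have "a i = 1 / real (sylvester i) + \<gamma>" using True by (simp add: a_def)
    then show ?thesis using h gp by linarith
  next
    case False
    show ?thesis
    proof (cases "i = Suc q")
      case True
      then have "a i = su q - real d * \<gamma>" using False by (simp add: a_def)
      then show ?thesis using aq gp by linarith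
    next
      case False2: False
      then have "a i = \<gamma>" using False by (simp add: a_def)
      then show ?thesis using gp by simp
    qed
  qed
  have asuf: "(\<Sum>i=k..d+1. a i) = (if k \<le> Suc q then su (k-1) - real (k-1) * \<gamma> else real (d+2-k) * \<gamma>)"
    if "1 \<le> k" "k \<le> d+2" for k
  proof -
    have gen: "\<forall>k. k + j = d + 2 \<longrightarrow> 1 \<le> k \<longrightarrow> (\<Sum>i=k..d+1. a i) = (if k \<le> Suc q then su (k-1) - real (k-1) * \<gamma> else real (d+2-k) * \<gamma>)" for j
    proof (induction j)
      case 0
      show ?case
      proof (intro allI impI)
        fix k assume "k + 0 = d + 2" "1 \<le> k"
        then have "k = d + 2" by simp
        moreover have "\<not> (d + 2 \<le> Suc q)" using qd by simp
        ultimately show "(\<Sum>i=k..d+1. a i) = (if k \<le> Suc q then su (k-1) - real (k-1) * \<gamma> else real (d+2-k) * \<gamma>)"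
          by simp
      qed
    next
      case (Suc j)
      show ?case
      proof (intro allI impI)
        fix k assume k: "k + Suc j = d + 2" "1 \<le> k"
        have IH: "(\<Sum>i=Suc k..d+1. a i) = (if Suc k \<le> Suc q then su k - real k * \<gamma> else real (d+2-Suc k) * \<gamma>)"
          using Suc.IH k by (metis add_Suc_shift diff_Suc_1 le_add1 plus_1_eq_Suc)
        have sp: "(\<Sum>i=k..d+1. a i) = a k + (\<Sum>i=Suc k..d+1. a i)"
          using k by (intro sum.atLeast_Suc_atMost) simp
        show "(\<Sum>i=k..d+1. a i) = (if k \<le> Suc q then su (k-1) - real (k-1) * \<gamma> else real (d+2-k) * \<gamma>)"
        proof (cases "k \<le> q")
          case True
          have kk: "k = Suc (k - 1)" using k by simp
          have su1: "su k = su (k-1) - 1 / real (sylvester k)" using su_Suc[of "k-1"] kk by simp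
          have rk: "real k * \<gamma> = real (k-1) * \<gamma> + \<gamma>" using k by (simp add: of_nat_diff algebra_simps)
          have ak: "a k = 1 / real (sylvester k) + \<gamma>" using True by (simp add: a_def)
          have I: "(\<Sum>i=Suc k..d+1. a i) = su k - real k * \<gamma>" using IH True by simp
          have g: "(if k \<le> Suc q then su (k-1) - real (k-1) * \<gamma> else real (d+2-k) * \<gamma>) = su (k-1) - real (k-1) * \<gamma>"
            using True by simp
          show ?thesis unfolding g sp ak I using su1 rk by linarith
        next
          case False
          show ?thesis
          proof (cases "k = Suc q")
            case True
            have r: "real (d + 2 - Suc k) * \<gamma> = real d * \<gamma> - real q * \<gamma>" using True qd k by (simp add: of_nat_diff algebra_simps)
            have rq: "real (k - 1) * \<gamma> = real q * \<gamma>" using True by simp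
            have ak: "a k = su q - real d * \<gamma>" using True by (simp add: a_def)
            have I: "(\<Sum>i=Suc k..d+1. a i) = real (d+2-Suc k) * \<gamma>" using IH True by simp
            have g: "(if k \<le> Suc q then su (k-1) - real (k-1) * \<gamma> else real (d+2-k) * \<gamma>) = su q - real q * \<gamma>"
              using True by simp
            show ?thesis unfolding g sp ak I using r by linarith
          next
            case False2: False
            have r: "real (d + 2 - k) * \<gamma> = real (d + 2 - Suc k) * \<gamma> + \<gamma>" using k by (simp add: of_nat_diff algebra_simps)
            have ak: "a k = \<gamma>" using False False2 by (simp add: a_def)
            have I: "(\<Sum>i=Suc k..d+1. a i) = real (d+2-Suc k) * \<gamma>" using IH False False2 by simp
            have g: "(if k \<le> Suc q then su (k-1) - real (k-1) * \<gamma> else real (d+2-k) * \<gamma>) = real (d+2-k) * \<gamma>"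
              using False False2 by simp
            show ?thesis unfolding g sp ak I using r by linarith
          qed
        qed
      qed
    qed
    have "k + (d + 2 - k) = d + 2" using that by simp
    then show ?thesis using gen[of "d + 2 - k"] that by blast
  qed
  have bsuf: "(\<Sum>i=k..d+1. \<beta> i) = R (k-1) - real (k-1) * \<gamma>" if "1 \<le> k" "k \<le> d+1" for k
  proof -
    have c: "card {k..d+1} = d + 2 - k" by simp
    have "R (k-1) = (\<Sum>j=k..d+1. \<beta> j) - real (d + 2 - k) * \<gamma> + N * \<gamma>"
      using that by (simp add: R_def sum_subtractf c)
    moreover have "real (d + 2 - k) = real d + 2 - real k" using that by (simp add: of_nat_diff)
    moreover have "real (k - 1) = real k - 1" using that by (simp add: of_nat_diff)
    ultimately show ?thesis by (simp add: N_def algebra_simps)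
  qed
  have kar: "(\<Prod>i=1..d+1. a i) \<le> (\<Prod>i=1..d+1. \<beta> i)"
  proof (rule karamata_suffix)
    show "\<forall>i\<in>{1..d+1}. a i > 0 \<and> \<beta> i > 0" using apos bpos by auto
    show "\<forall>i j. 1 \<le> i \<longrightarrow> i \<le> j \<longrightarrow> j \<le> d+1 \<longrightarrow> \<beta> j \<le> \<beta> i" using mono by auto
    show "\<forall>k\<in>{1..d+1}. (\<Sum>i=k..d+1. a i) \<le> (\<Sum>i=k..d+1. \<beta> i)"
    proof
      fix k assume k: "k \<in> {1..d+1}"
      show "(\<Sum>i=k..d+1. a i) \<le> (\<Sum>i=k..d+1. \<beta> i)"
      proof (cases "k \<le> Suc q")
        case True
        have "su (k-1) \<le> R (k-1)" using LS[of "k-1"] True qd k by auto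
        then show ?thesis using asuf[of k] bsuf[of k] k True by auto
      next
        case False
        have "N * \<gamma> \<le> R (k-1)" using Rge[of "k-1"] k by auto
        moreover have "real (d + 2 - k) = N - real (k - 1)" using k by (simp add: N_def of_nat_diff)
        ultimately show ?thesis using asuf[of k] bsuf[of k] k False by (auto simp: algebra_simps)
      qed
    qed
  qed
  have lhs: "(\<Prod>i=1..d+1. \<beta> i) = (\<Prod>i=1..d. \<beta> i) * \<gamma>" by (simp add: \<gamma>_def)
  have rhs: "(\<Prod>i=1..d+1. a i) = (\<Prod>i=1..q. a i) * ((su q - real d * \<gamma>) * \<gamma> ^ (d - q))"
  proof -
    have "(\<Prod>i=1..d+1. a i) = (\<Prod>i=1..q. a i) * (\<Prod>i=Suc q..d+1. a i)"
      using qd by (intro prod_split_at) auto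
    moreover have "(\<Prod>i=Suc q..d+1. a i) = a (Suc q) * (\<Prod>i=Suc (Suc q)..d+1. a i)"
      using qd by (intro prod.atLeast_Suc_atMost) auto
    moreover have "(\<Prod>i=Suc (Suc q)..d+1. a i) = (\<Prod>i=Suc (Suc q)..d+1. \<gamma>)"
      by (intro prod.cong) (auto simp: a_def)
    moreover have "(\<Prod>i=Suc (Suc q)..d+1. \<gamma>) = \<gamma> ^ (d - q)" by simp
    moreover have "a (Suc q) = su q - real d * \<gamma>" by (simp add: a_def)
    ultimately show ?thesis by simp
  qed
  have aprod: "(\<Prod>i=1..q. a i) \<ge> su q"
  proof -
    have "su q = (\<Prod>i=1..q. 1 / real (sylvester i))" by (rule su_prod)
    also have "\<dots> \<le> (\<Prod>i=1..q. a i)"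
    proof (rule prod_mono)
      fix i assume i: "i \<in> {1..q}"
      have "sylvester i \<ge> 2" using i by (intro sylvester_ge2) auto
      then show "0 \<le> 1 / real (sylvester i) \<and> 1 / real (sylvester i) \<le> a i" using i gp by (auto simp: a_def)
    qed
    finally show ?thesis .
  qed
  have fac: "(su q - real d * \<gamma>) * \<gamma> ^ (d - q) \<ge> 0" using aq gp by auto
  have "su q * ((su q - real d * \<gamma>) * \<gamma> ^ (d - q)) \<le> (\<Prod>i=1..q. a i) * ((su q - real d * \<gamma>) * \<gamma> ^ (d - q))"
    using aprod fac by (intro mult_right_mono) auto
  also have "\<dots> \<le> (\<Prod>i=1..d. \<beta> i) * \<gamma>" using kar unfolding lhs rhs .
  finally have B0: "su q * ((su q - real d * \<gamma>) * \<gamma> ^ (d - q)) \<le> (\<Prod>i=1..d. \<beta> i) * \<gamma>" .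
  have "\<gamma> ^ (d - q) = \<gamma> ^ (d - 1 - q) * \<gamma>" using qd d
    by (metis Suc_diff_Suc Suc_diff_le diff_Suc_1 le_add_diff_inverse2 le_diff_conv mult.commute plus_1_eq_Suc power_Suc)
  then have "(su q * (su q - real d * \<gamma>) * \<gamma> ^ (d - 1 - q)) * \<gamma> \<le> (\<Prod>i=1..d. \<beta> i) * \<gamma>"
    using B0 by (simp add: algebra_simps)
  then have B: "su q * (su q - real d * \<gamma>) * \<gamma> ^ (d - 1 - q) \<le> (\<Prod>i=1..d. \<beta> i)"
    using gp by simp
  have "su (d-1)^2 / N \<le> su q * (su q - real d * \<gamma>) * \<gamma> ^ (d - 1 - q)"
    by (rule num_bound[OF d N_def qd gp gq gq2])
  then show ?thesis using B by (simp add: N_def)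
qed



theorem lemma4p1:
  fixes d :: nat
  assumes "d \<ge> 4"
  shows "tau d \<ge> 1 / (real (d+1) * (real (sylvester d) - 1)^2)"
proof -
  have d1: "d \<ge> 1" using assms by simp
  have sd: "real (sylvester d) - 1 = sv (d-1)"
    using syl_succ[of "d-1"] d1 by simp
  have bnd: "1 / (real (d+1) * (real (sylvester d) - 1)^2) = su (d-1)^2 / real (d+1)"
    unfolding sd by (simp add: su_def power_one_over)
  define X where "X = (\<lambda>\<beta>. \<Prod>i=1..d. \<beta> i) ` {\<beta>. tau_feasible d \<beta>}"
  define c :: real where "c = 1 / real (d+1)"
  have feas0: "tau_feasible d (\<lambda>i. c)"
    unfolding tau_feasible_def
  proof (intro conjI ballI)
    show "(\<Sum>i=1..d+1. c) = 1" by (simp add: c_def)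
    show "0 \<le> c" by (simp add: c_def)
    fix t assume t: "t \<in> {1..d}"
    then have "(\<Prod>i=1..t. c - c) = 0" by simp
    moreover have "(\<Sum>j=t+1..d+1. c - c) + real (d+1) * c \<ge> 0" by (simp add: c_def)
    ultimately show "(\<Prod>i=1..t. c - c) \<le> (\<Sum>j=t+1..d+1. c - c) + real (d+1) * c" by linarith
  qed simp
  have ne: "X \<noteq> {}" unfolding X_def using feas0 by blast
  have lb: "su (d-1)^2 / real (d+1) \<le> x" if "x \<in> X" for x
  proof -
    obtain \<beta> where b: "tau_feasible d \<beta>" and x: "x = (\<Prod>i=1..d. \<beta> i)"
      using \<open>x \<in> X\<close> unfolding X_def by blast
    show ?thesis unfolding x
      by (rule main_bound[OF d1]) (use b in \<open>auto simp: tau_feasible_def\<close>)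
  qed
  have "su (d-1)^2 / real (d+1) \<le> Inf X" by (rule cInf_greatest[OF ne lb])
  then show ?thesis unfolding bnd tau_def X_def .
qed


end
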